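(* Let $\mathcal{H}$ be a complex Hilbert space and let $\mathcal{A}:\operatorname{dom}(\mathcal{A})\subseteq\mathcal{H}\to\mathcal{H}$ be a closed linear operator (not necessarily bounded or selfadjoint). Let $$r(z)=\omega_0+\sum_{j=1}^N\sum_{i=1}^{\nu_j}\frac{\omega_{j,i}}{(z_j-z)^i}$$ with $\omega_0,\omega_{j,i}\in\mathbb{C}$, positive integers $\nu_j$, and distinct points $z_1,\dots,z_N$ in the resolvent set $\rho(\mathcal{A})$, and let $r(\mathcal{A})=\omega_0+\sum_{j=1}^N\sum_{i=1}^{\nu_j}\omega_{j,i}R(z_j)^i$, a bounded operator on $\mathcal{H}$. Then for every $\mu\in\mathbb{C}$ with $\mu\neq\omega_0$, $$E_\mu(r(\mathcal{A}))=\bigoplus_{\lambda\in r^{-1}_\mu}E^\infty_\lambda(\mathcal{A}),$$ where the right-hand side is a direct sum.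
   Context: $R(z)=(z-\mathcal{A})^{-1}:\mathcal{H}\to\operatorname{dom}(\mathcal{A})$ denotes the resolvent for $z\in\rho(\mathcal{A})$. Set $\operatorname{dom}(\mathcal{A}^1)=\operatorname{dom}(\mathcal{A})$, $\operatorname{dom}(\mathcal{A}^n)=\{x\in\operatorname{dom}(\mathcal{A}):\mathcal{A}x\in\operatorname{dom}(\mathcal{A}^{n-1})\}$ for $n>1$, and $\operatorname{dom}(\mathcal{A}^\infty)=\bigcap_{n\ge1}\operatorname{dom}(\mathcal{A}^n)$. For $\lambda\in\mathbb{C}$, $E^\infty_\lambda(\mathcal{A})=\bigcup_{n\ge1}\{u\in\operatorname{dom}(\mathcal{A}^\infty):(\mathcal{A}-\lambda)^nu=0\}$ (trivial if $\lambda$ is not an eigenvalue). For $\mu\in\mathbb{C}$, $E_\mu(r(\mathcal{A}))=\bigcup_{n\ge1}\{u\in\mathcal{H}:(r(\mathcal{A})-\mu)^nu=0\}$. Finally $r^{-1}_\mu=\{\lambda\in\mathbb{C}\setminus\{z_1,\dots,z_N\}:\ r(\lambda)=\mu\}$. *)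

theory Defs
  imports "HOL-Analysis.Analysis"
begin

class complex_vector = real_vector +
  fixes scaleC :: "complex \<Rightarrow> 'a \<Rightarrow> 'a" (infixr "*\<^sub>C" 75)
  assumes scaleC_add_right: "a *\<^sub>C (x + y) = a *\<^sub>C x + a *\<^sub>C y"
    and scaleC_add_left: "(a + b) *\<^sub>C x = a *\<^sub>C x + b *\<^sub>C x"
    and scaleC_scaleC: "a *\<^sub>C (b *\<^sub>C x) = (a * b) *\<^sub>C x"
    and scaleC_one: "1 *\<^sub>C x = x"
    and scaleR_scaleC: "scaleR r x = complex_of_real r *\<^sub>C x"

class complex_inner = complex_vector + real_normed_vector +
  fixes cinner :: "'a \<Rightarrow> 'a \<Rightarrow> complex"
  assumes cinner_commute: "cinner x y = cnj (cinner y x)"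
    and cinner_add_left: "cinner (x + y) z = cinner x z + cinner y z"
    and cinner_scaleC_left: "cinner (a *\<^sub>C x) y = cnj a * cinner x y"
    and cinner_nonneg: "0 \<le> Re (cinner x x)"
    and cinner_eq_zero_iff: "cinner x x = 0 \<longleftrightarrow> x = 0"
    and norm_eq_sqrt_cinner: "norm x = sqrt (Re (cinner x x))"

class chilbert_space = complex_inner + complete_space

text \<open>An operator is given by a domain D and a function A (only its values on D matter).\<close>

definition csubspace :: "'a::complex_vector set \<Rightarrow> bool" where
  "csubspace D \<longleftrightarrow> 0 \<in> D \<and> (\<forall>x\<in>D. \<forall>y\<in>D. x + y \<in> D) \<and> (\<forall>c. \<forall>x\<in>D. c *\<^sub>C x \<in> D)"

definition linear_op :: "'a::complex_vector set \<Rightarrow> ('a \<Rightarrow> 'a) \<Rightarrow> bool" where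
  "linear_op D A \<longleftrightarrow> csubspace D \<and>
     (\<forall>x\<in>D. \<forall>y\<in>D. A (x + y) = A x + A y) \<and> (\<forall>c. \<forall>x\<in>D. A (c *\<^sub>C x) = c *\<^sub>C A x)"

definition closed_op :: "'a::chilbert_space set \<Rightarrow> ('a \<Rightarrow> 'a) \<Rightarrow> bool" where
  "closed_op D A \<longleftrightarrow> closed {(x, A x) | x. x \<in> D}"

definition resolvent :: "'a::complex_vector set \<Rightarrow> ('a \<Rightarrow> 'a) \<Rightarrow> complex \<Rightarrow> 'a \<Rightarrow> 'a" where
  "resolvent D A z = inv_into D (\<lambda>x. z *\<^sub>C x - A x)"

definition resolvent_set :: "'a::chilbert_space set \<Rightarrow> ('a \<Rightarrow> 'a) \<Rightarrow> complex set" where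
  "resolvent_set D A = {z. bij_betw (\<lambda>x. z *\<^sub>C x - A x) D UNIV \<and>
      (\<exists>K. \<forall>y. norm (resolvent D A z y) \<le> K * norm y)}"

fun dom_pow :: "'a set \<Rightarrow> ('a \<Rightarrow> 'a) \<Rightarrow> nat \<Rightarrow> 'a set" where
  "dom_pow D A 0 = UNIV"
| "dom_pow D A (Suc n) = {x \<in> D. A x \<in> dom_pow D A n}"

definition dom_inf :: "'a set \<Rightarrow> ('a \<Rightarrow> 'a) \<Rightarrow> 'a set" where
  "dom_inf D A = (\<Inter>n\<in>{1..}. dom_pow D A n)"

definition gen_eigenspace_inf :: "'a::complex_vector set \<Rightarrow> ('a \<Rightarrow> 'a) \<Rightarrow> complex \<Rightarrow> 'a set" where
  "gen_eigenspace_inf D A l =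
     (\<Union>n\<in>{1..}. {u \<in> dom_inf D A. ((\<lambda>x. A x - l *\<^sub>C x) ^^ n) u = 0})"

definition gen_eigenspace :: "('a::complex_vector \<Rightarrow> 'a) \<Rightarrow> complex \<Rightarrow> 'a set" where
  "gen_eigenspace T \<mu> = (\<Union>n\<in>{1..}. {u. ((\<lambda>x. T x - \<mu> *\<^sub>C x) ^^ n) u = 0})"

definition rat_fun :: "complex \<Rightarrow> (nat \<Rightarrow> nat \<Rightarrow> complex) \<Rightarrow> (nat \<Rightarrow> nat) \<Rightarrow> (nat \<Rightarrow> complex)
    \<Rightarrow> nat \<Rightarrow> complex \<Rightarrow> complex" where
  "rat_fun \<omega>0 \<omega> \<nu> zs N z = \<omega>0 + (\<Sum>j=1..N. \<Sum>i=1..\<nu> j. \<omega> j i / (zs j - z) ^ i)"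

definition rat_op :: "'a::complex_vector set \<Rightarrow> ('a \<Rightarrow> 'a) \<Rightarrow> complex \<Rightarrow> (nat \<Rightarrow> nat \<Rightarrow> complex)
    \<Rightarrow> (nat \<Rightarrow> nat) \<Rightarrow> (nat \<Rightarrow> complex) \<Rightarrow> nat \<Rightarrow> 'a \<Rightarrow> 'a" where
  "rat_op D A \<omega>0 \<omega> \<nu> zs N x =
     \<omega>0 *\<^sub>C x + (\<Sum>j=1..N. \<Sum>i=1..\<nu> j. \<omega> j i *\<^sub>C ((resolvent D A (zs j)) ^^ i) x)"

definition rat_preimage :: "complex \<Rightarrow> (nat \<Rightarrow> nat \<Rightarrow> complex) \<Rightarrow> (nat \<Rightarrow> nat) \<Rightarrow> (nat \<Rightarrow> complex)
    \<Rightarrow> nat \<Rightarrow> complex \<Rightarrow> complex set" where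
  "rat_preimage \<omega>0 \<omega> \<nu> zs N \<mu> = {z. z \<notin> zs ` {1..N} \<and> rat_fun \<omega>0 \<omega> \<nu> zs N z = \<mu>}"

definition is_direct_sum :: "'a::complex_vector set \<Rightarrow> 'b set \<Rightarrow> ('b \<Rightarrow> 'a set) \<Rightarrow> bool" where
  "is_direct_sum V S E \<longleftrightarrow>
     V = {(\<Sum>s\<in>F. f s) | F f. finite F \<and> F \<subseteq> S \<and> (\<forall>s\<in>F. f s \<in> E s)} \<and>
     (\<forall>F f. finite F \<and> F \<subseteq> S \<and> (\<forall>s\<in>F. f s \<in> E s) \<and> (\<Sum>s\<in>F. f s) = 0 \<longrightarrow> (\<forall>s\<in>F. f s = 0))"

end

theory Submission
  imports Defs "HOL-Computational_Algebra.Fundamental_Theorem_Algebra"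
    "HOL-Computational_Algebra.Field_as_Ring" "HOL-Computational_Algebra.Polynomial_Factorial"
begin


lemma additive_scaleC_right: "Modules.additive (\<lambda>x::'a::complex_vector. a *\<^sub>C x)"
  by unfold_locales (rule scaleC_add_right)
lemma additive_scaleC_left: "Modules.additive (\<lambda>a. a *\<^sub>C (x::'a::complex_vector))"
  by unfold_locales (rule scaleC_add_left)

lemma scaleC_zero_left[simp]: "0 *\<^sub>C (x::'a::complex_vector) = 0"
  using Modules.additive.zero[OF additive_scaleC_left] by blast
lemma scaleC_zero_right[simp]: "a *\<^sub>C (0::'a::complex_vector) = 0"
  using Modules.additive.zero[OF additive_scaleC_right] by blast
lemma scaleC_minus_left: "(- a) *\<^sub>C (x::'a::complex_vector) = - (a *\<^sub>C x)"
  using Modules.additive.minus[OF additive_scaleC_left] by blast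
lemma scaleC_minus_right: "a *\<^sub>C (- x::'a::complex_vector) = - (a *\<^sub>C x)"
  using Modules.additive.minus[OF additive_scaleC_right] by blast
lemma scaleC_diff_left: "(a - b) *\<^sub>C (x::'a::complex_vector) = a *\<^sub>C x - b *\<^sub>C x"
  using Modules.additive.diff[OF additive_scaleC_left] by blast
lemma scaleC_diff_right: "a *\<^sub>C (x - y::'a::complex_vector) = a *\<^sub>C x - a *\<^sub>C y"
  using Modules.additive.diff[OF additive_scaleC_right] by blast
lemma scaleC_sum_right: "a *\<^sub>C (\<Sum>i\<in>I. f i) = (\<Sum>i\<in>I. a *\<^sub>C (f i::'a::complex_vector))"
  using Modules.additive.sum[OF additive_scaleC_right] by blast
lemma scaleC_minus1: "(-1) *\<^sub>C (x::'a::complex_vector) = - x"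
  by (simp add: scaleC_minus_left scaleC_one)

lemma scaleC_cancel:
  assumes "c \<noteq> 0" "c *\<^sub>C (x::'a::complex_vector) = 0" shows "x = 0"
proof -
  have "x = (inverse c * c) *\<^sub>C x" using assms(1) by (simp add: scaleC_one)
  also have "\<dots> = 0" by (simp add: assms(2) flip: scaleC_scaleC)
  finally show ?thesis .
qed

definition lin_on :: "'a::complex_vector set \<Rightarrow> ('a \<Rightarrow> 'a) \<Rightarrow> bool" where
  "lin_on V F \<longleftrightarrow> (\<forall>x\<in>V. \<forall>y\<in>V. F (x + y) = F x + F y) \<and> (\<forall>c. \<forall>x\<in>V. F (c *\<^sub>C x) = c *\<^sub>C F x)"

lemma csub_0: "csubspace V \<Longrightarrow> 0 \<in> V" by (simp add: csubspace_def)
lemma csub_add: "csubspace V \<Longrightarrow> x \<in> V \<Longrightarrow> y \<in> V \<Longrightarrow> x + y \<in> V" by (simp add: csubspace_def)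
lemma csub_scale: "csubspace V \<Longrightarrow> x \<in> V \<Longrightarrow> c *\<^sub>C x \<in> V" by (simp add: csubspace_def)
lemma csub_minus: "csubspace V \<Longrightarrow> x \<in> V \<Longrightarrow> - x \<in> V"
  using csub_scale[of V x "-1"] by (simp add: scaleC_minus1)
lemma csub_diff: "csubspace V \<Longrightarrow> x \<in> V \<Longrightarrow> y \<in> V \<Longrightarrow> x - y \<in> V"
  using csub_add[of V x "- y"] csub_minus[of V y] by simp
lemma csub_sum: "csubspace V \<Longrightarrow> (\<And>i. i \<in> I \<Longrightarrow> f i \<in> V) \<Longrightarrow> (\<Sum>i\<in>I. f i) \<in> V"
  by (induct I rule: infinite_finite_induct) (auto simp: csub_0 csub_add)

lemma lin_on_add: "lin_on V F \<Longrightarrow> x \<in> V \<Longrightarrow> y \<in> V \<Longrightarrow> F (x + y) = F x + F y"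
  by (simp add: lin_on_def)
lemma lin_on_scale: "lin_on V F \<Longrightarrow> x \<in> V \<Longrightarrow> F (c *\<^sub>C x) = c *\<^sub>C F x"
  by (simp add: lin_on_def)
lemma lin_on_0: "lin_on V F \<Longrightarrow> csubspace V \<Longrightarrow> F 0 = 0"
  using lin_on_scale[of V F 0 0] csub_0[of V] by simp
lemma lin_on_minus: "lin_on V F \<Longrightarrow> csubspace V \<Longrightarrow> x \<in> V \<Longrightarrow> F (- x) = - F x"
  using lin_on_scale[of V F x "-1"] by (simp add: scaleC_minus1)
lemma lin_on_diff: "lin_on V F \<Longrightarrow> csubspace V \<Longrightarrow> x \<in> V \<Longrightarrow> y \<in> V \<Longrightarrow> F (x - y) = F x - F y"
  using lin_on_add[of V F x "- y"] lin_on_minus[of V F y] csub_minus[of V y] by simp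
lemma lin_on_sum: "lin_on V F \<Longrightarrow> csubspace V \<Longrightarrow> (\<And>i. i \<in> I \<Longrightarrow> f i \<in> V) \<Longrightarrow>
    F (\<Sum>i\<in>I. f i) = (\<Sum>i\<in>I. F (f i))"
proof (induct I rule: infinite_finite_induct)
  case (infinite I) then show ?case by (simp add: lin_on_0)
next
  case empty then show ?case by (simp add: lin_on_0)
next
  case (insert i I)
  then show ?case by (simp add: lin_on_add csub_sum)
qed



locale opctx =
  fixes D :: "'a::complex_vector set" and A :: "'a \<Rightarrow> 'a"
  assumes lin: "linear_op D A"
begin

lemma D_sub: "csubspace D" using lin by (simp add: linear_op_def)
lemma A_lin: "lin_on D A" using lin by (simp add: linear_op_def lin_on_def)
lemma A_0[simp]: "A 0 = 0" using lin_on_0[OF A_lin D_sub] .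

lemma dom_pow_sub: "csubspace (dom_pow D A n)"
proof (induct n)
  case 0 then show ?case by (simp add: csubspace_def)
next
  case (Suc n)
  show ?case unfolding csubspace_def dom_pow.simps
    using D_sub Suc csub_0[OF D_sub]
    by (auto simp: csub_add csub_scale lin_on_add[OF A_lin] lin_on_scale[OF A_lin] csub_0)
qed

lemma dom_pow_Suc_le: "dom_pow D A (Suc n) \<subseteq> dom_pow D A n"
proof (induct n)
  case 0 then show ?case by simp
next
  case (Suc n) then show ?case by auto
qed

lemma dom_pow_mono: "m \<le> n \<Longrightarrow> dom_pow D A n \<subseteq> dom_pow D A m"
  by (induct n rule: dec_induct) (use dom_pow_Suc_le in auto)

definition V where "V = dom_inf D A"

lemma V_iff: "x \<in> V \<longleftrightarrow> (\<forall>n. x \<in> dom_pow D A n)"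
  unfolding V_def dom_inf_def
  by (metis (full_types) INT_iff atLeast_iff dom_pow.simps(1) iso_tuple_UNIV_I less_one
      linorder_not_le)

lemma V_sub: "csubspace V"
  using dom_pow_sub unfolding csubspace_def by (auto simp: V_iff)

lemma V_D: "x \<in> V \<Longrightarrow> x \<in> D"
  unfolding V_iff by (metis dom_pow.simps(2) mem_Collect_eq)

lemma V_A: "x \<in> V \<Longrightarrow> A x \<in> V"
  unfolding V_iff by (metis dom_pow.simps(2) mem_Collect_eq)

lemma A_lin_V: "lin_on V A"
  using A_lin V_D unfolding lin_on_def by blast

section \<open>Polynomials applied to A\<close>

definition peval :: "complex poly \<Rightarrow> 'a \<Rightarrow> 'a" where
  "peval p = fold_coeffs (\<lambda>c F x. c *\<^sub>C x + A (F x)) p (\<lambda>x. 0)"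

lemma peval_0[simp]: "peval 0 x = 0"
  by (simp add: peval_def)

lemma peval_pCons: "peval (pCons a p) x = a *\<^sub>C x + A (peval p x)"
proof (cases "a = 0 \<and> p = 0")
  case True then show ?thesis by (simp add: peval_def)
next
  case False then show ?thesis
    by (auto simp: peval_def fold_coeffs_def cCons_def)
qed

lemma peval_const[simp]: "peval [:c:] x = c *\<^sub>C x"
  by (simp add: peval_pCons)

lemma peval_1[simp]: "peval 1 x = x"
  using peval_const[of 1 x] by (simp add: one_pCons scaleC_one)

lemma peval_V: "x \<in> V \<Longrightarrow> peval p x \<in> V"
  by (induct p rule: pCons_induct) (auto simp: peval_pCons csub_0[OF V_sub] csub_add[OF V_sub] csub_scale[OF V_sub] V_A)

lemma peval_add_poly: "x \<in> V \<Longrightarrow> peval (p + q) x = peval p x + peval q x"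
proof (induct p q rule: poly_induct2)
  case 0 then show ?case by simp
next
  case (pCons a p b q)
  then show ?case
    by (simp add: peval_pCons lin_on_add[OF A_lin_V] peval_V scaleC_add_left algebra_simps)
qed

lemma peval_smult: "x \<in> V \<Longrightarrow> peval (smult c p) x = c *\<^sub>C peval p x"
proof (induct p rule: pCons_induct)
  case 0 then show ?case by simp
next
  case (pCons a p)
  then show ?case
    by (simp add: peval_pCons lin_on_scale[OF A_lin_V] peval_V scaleC_add_right scaleC_scaleC)
qed

lemma peval_lin: "lin_on V (peval p)"
proof (induct p rule: pCons_induct)
  case 0 then show ?case by (simp add: lin_on_def)
next
  case (pCons a p)
  then show ?case
    unfolding lin_on_def
    by (simp add: peval_pCons lin_on_add[OF A_lin_V] lin_on_scale[OF A_lin_V] peval_V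
        scaleC_add_right scaleC_scaleC csub_add[OF V_sub] csub_scale[OF V_sub] algebra_simps mult.commute)
qed

end

context opctx begin
lemma peval_zero_vec[simp]: "peval p 0 = 0"
  using lin_on_0[OF peval_lin V_sub] .

lemma peval_mult: "x \<in> V \<Longrightarrow> peval (p * q) x = peval p (peval q x)"
proof (induct p rule: pCons_induct)
  case 0 then show ?case by simp
next
  case (pCons a p)
  then show ?case
    by (simp add: peval_pCons peval_add_poly peval_smult peval_V)
qed

lemma peval_sum_poly: "x \<in> V \<Longrightarrow> peval (\<Sum>i\<in>I. f i) x = (\<Sum>i\<in>I. peval (f i) x)"
  by (induct I rule: infinite_finite_induct) (auto simp: peval_add_poly)

lemma peval_commute:
  assumes "lin_on V F" "\<And>x. x \<in> V \<Longrightarrow> F x \<in> V" "\<And>x. x \<in> V \<Longrightarrow> F (A x) = A (F x)"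
    and "x \<in> V"
  shows "F (peval p x) = peval p (F x)"
  using assms(4)
proof (induct p rule: pCons_induct)
  case 0 then show ?case using lin_on_0[OF assms(1) V_sub] by simp
next
  case (pCons a p)
  then show ?case
    by (simp add: peval_pCons lin_on_add[OF assms(1)] lin_on_scale[OF assms(1)] peval_V assms
        csub_scale[OF V_sub] V_A)
qed

lemma peval_lin_zm: "x \<in> D \<Longrightarrow> peval [:z, -1:] x = z *\<^sub>C x - A x"
  by (simp add: peval_pCons lin_on_scale[OF A_lin] scaleC_minus1 lin_on_minus[OF A_lin D_sub])

lemma peval_lin_mz: "peval [:-l, 1:] x = A x - l *\<^sub>C x"
  by (simp add: peval_pCons scaleC_one scaleC_minus_left)

lemma peval_pow_eig: "x \<in> V \<Longrightarrow> ((\<lambda>x. A x - l *\<^sub>C x) ^^ n) x = peval ([:-l, 1:] ^ n) x"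
proof (induct n)
  case 0 then show ?case by simp
next
  case (Suc n)
  have "peval ([:-l, 1:] ^ Suc n) x = peval [:-l, 1:] (peval ([:-l, 1:] ^ n) x)"
    by (simp only: power_Suc peval_mult[OF Suc.prems])
  then show ?case by (simp only: funpow.simps o_apply Suc peval_lin_mz)
qed

lemma gen_eig_iff: "u \<in> gen_eigenspace_inf D A l \<longleftrightarrow> u \<in> V \<and> (\<exists>n\<ge>1. peval ([:-l, 1:] ^ n) u = 0)"
  unfolding gen_eigenspace_inf_def V_def[symmetric]
  using peval_pow_eig by auto

definition injV :: "complex poly \<Rightarrow> bool" where
  "injV g \<longleftrightarrow> (\<forall>y\<in>V. peval g y = 0 \<longrightarrow> y = 0)"

lemma injV_1: "injV 1" unfolding injV_def by simp
lemma injV_mult: assumes "injV a" "injV b" shows "injV (a * b)"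
  unfolding injV_def
proof (intro ballI impI)
  fix y assume y: "y \<in> V" "peval (a * b) y = 0"
  then have "peval a (peval b y) = 0" by (simp only: peval_mult)
  then have "peval b y = 0" using assms(1) peval_V[OF y(1)] unfolding injV_def by blast
  then show "y = 0" using assms(2) y(1) unfolding injV_def by blast
qed
lemma injV_pow: "injV a \<Longrightarrow> injV (a ^ n)"
proof (induct n)
  case 0 then show ?case using injV_1 by (simp only: power_0)
next
  case (Suc n) then show ?case using injV_mult by (simp only: power_Suc)
qed
lemma injV_prod: "(\<And>i. i \<in> I \<Longrightarrow> injV (f i)) \<Longrightarrow> injV (\<Prod>i\<in>I. f i)"
proof (induct I rule: infinite_finite_induct)
  case (infinite I) then show ?case using injV_1 prod.infinite by metis
next
  case empty then show ?case using injV_1 by (simp only: prod.empty)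
next
  case (insert i I)
  then have "injV (f i * prod f I)" using injV_mult by blast
  then show ?case using insert(1,2) by (metis prod.insert)
qed
lemma injV_smult: assumes "c \<noteq> 0" "injV a" shows "injV (smult c a)"
  unfolding injV_def
proof (intro ballI impI)
  fix y assume y: "y \<in> V" "peval (smult c a) y = 0"
  then have "c *\<^sub>C peval a y = 0" by (simp add: peval_smult)
  then have "peval a y = 0" using scaleC_cancel[OF assms(1)] by blast
  then show "y = 0" using assms(2) y(1) unfolding injV_def by blast
qed

section \<open>Primary decomposition\<close>

lemma bezout_poly: "coprime P (Q::complex poly) \<Longrightarrow> \<exists>s t. s * P + t * Q = 1"
proof -
  assume "coprime P Q"
  then have "gcd P Q = 1" by simp
  then have "fst (bezout_coefficients P Q) * P + snd (bezout_coefficients P Q) * Q = 1"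
    using bezout_coefficients_fst_snd[of P Q] by simp
  then show ?thesis by blast
qed

lemma PD1:
  assumes "coprime P Q" "x \<in> V" "peval P x = 0" "peval Q x = 0"
  shows "x = 0"
proof -
  obtain s t where st: "s * P + t * Q = 1" using bezout_poly[OF assms(1)] by blast
  have "x = peval (s * P + t * Q) x" using st by simp
  also have "\<dots> = peval s (peval P x) + peval t (peval Q x)"
    using assms(2) by (simp only: peval_add_poly peval_mult)
  also have "\<dots> = 0" using assms by simp
  finally show ?thesis .
qed

lemma PD2:
  assumes "coprime P Q" "x \<in> V" "peval (P * Q) x = 0"
  shows "\<exists>y z. y \<in> V \<and> z \<in> V \<and> x = y + z \<and> peval P y = 0 \<and> peval Q z = 0"
proof -
  obtain s t where st: "s * P + t * Q = 1" using bezout_poly[OF assms(1)] by blast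
  define y where "y = peval (t * Q) x"
  define z where "z = peval (s * P) x"
  have "x = peval (s * P + t * Q) x" using st by simp
  also have "\<dots> = z + y" using assms(2) by (simp only: peval_add_poly y_def z_def)
  also have "\<dots> = y + z" by (simp only: add.commute)
  finally have "x = y + z" .
  moreover have "peval P y = 0"
  proof -
    have "peval P y = peval (P * (t * Q)) x" using assms(2)
      by (simp only: y_def peval_mult)
    also have "P * (t * Q) = t * (P * Q)" by (simp only: ac_simps)
    finally have "peval P y = peval (t * (P * Q)) x" .
    also have "\<dots> = 0" using assms by (simp only: peval_mult peval_zero_vec)
    finally show ?thesis .
  qed
  moreover have "peval Q z = 0"
  proof -
    have "peval Q z = peval (Q * (s * P)) x" using assms(2)
      by (simp only: z_def peval_mult)
    also have "Q * (s * P) = s * (P * Q)" by (simp only: ac_simps)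
    finally have "peval Q z = peval (s * (P * Q)) x" .
    also have "\<dots> = 0" using assms by (simp only: peval_mult peval_zero_vec)
    finally show ?thesis .
  qed
  moreover have "y \<in> V" "z \<in> V" unfolding y_def z_def using assms(2) by (rule peval_V)+
  ultimately show ?thesis by blast
qed

lemma coprime_lin: "a \<noteq> b \<Longrightarrow> coprime [:-a, 1:] [:-b, (1::complex):]"
proof (rule coprimeI)
  fix c assume ab: "a \<noteq> b" and c: "c dvd [:-a, 1:]" "c dvd [:-b, 1:]"
  then have "c dvd [:-a, 1:] - [:-b, 1:]" using dvd_diff by blast
  moreover have "[:-a, 1:] - [:-b, 1:] = [:b - a:]" by simp
  moreover have "is_unit [:b - a:]" using ab by (simp add: is_unit_const_poly_iff dvd_field_iff)
  ultimately show "is_unit c" by (metis dvd_unit_imp_unit)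
qed

lemma coprime_lin_pow_prod:
  assumes "finite S" "a \<notin> S"
  shows "coprime ([:-a, 1:] ^ k) (\<Prod>l\<in>S. [:-l, (1::complex):] ^ m l)"
proof (rule prod_coprime_right)
  fix l assume "l \<in> S"
  then have "a \<noteq> l" using assms(2) by blast
  then show "coprime ([:-a, 1:] ^ k) ([:-l, 1:] ^ m l)" using coprime_lin by simp
qed

lemma PD3:
  assumes "finite S"
  shows "x \<in> V \<Longrightarrow> peval (\<Prod>l\<in>S. [:-l, 1:] ^ k l) x = 0 \<Longrightarrow>
    \<exists>f. (\<forall>l\<in>S. f l \<in> V \<and> peval ([:-l, 1:] ^ k l) (f l) = 0) \<and> x = (\<Sum>l\<in>S. f l)"
  using assms
proof (induct S arbitrary: x rule: finite_induct)
  case empty then show ?case by simp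
next
  case (insert a S)
  have "peval ([:-a, 1:] ^ k a * (\<Prod>l\<in>S. [:-l, 1:] ^ k l)) x = 0"
    using insert by simp
  then obtain y z where yz: "y \<in> V" "z \<in> V" "x = y + z" "peval ([:-a, 1:] ^ k a) y = 0"
      "peval (\<Prod>l\<in>S. [:-l, 1:] ^ k l) z = 0"
    using PD2[OF coprime_lin_pow_prod[OF insert(1,2)] insert(4)] by blast
  obtain f where f: "\<forall>l\<in>S. f l \<in> V \<and> peval ([:-l, 1:] ^ k l) (f l) = 0" "z = (\<Sum>l\<in>S. f l)"
    using insert(3)[OF yz(2,5)] by blast
  define g where "g = f(a := y)"
  have "(\<Sum>l\<in>S. g l) = (\<Sum>l\<in>S. f l)" using insert(2) by (intro sum.cong) (auto simp: g_def)
  then have "x = (\<Sum>l\<in>insert a S. g l)" using insert(1,2) yz f by (simp add: g_def)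
  moreover have "\<forall>l\<in>insert a S. g l \<in> V \<and> peval ([:-l, 1:] ^ k l) (g l) = 0"
    using f yz by (auto simp: g_def)
  ultimately show ?case by blast
qed

lemma peval_pow_mono:
  assumes "x \<in> V" "peval ([:-l, 1:] ^ m) x = 0" "m \<le> n"
  shows "peval ([:-l, 1:] ^ n) x = 0"
proof -
  have "[:-l, 1:] ^ n = [:-l, 1:] ^ (n - m) * [:-l, 1:] ^ m"
    using assms(3) by (metis le_add_diff_inverse2 power_add)
  then show ?thesis by (simp only: peval_mult[OF assms(1)] assms(2) peval_zero_vec)
qed

lemma PD4:
  assumes "finite F"
  shows "(\<forall>l\<in>F. f l \<in> V \<and> peval ([:-l, 1:] ^ n) (f l) = 0) \<Longrightarrow> (\<Sum>l\<in>F. f l) = 0 \<Longrightarrow>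
    \<forall>l\<in>F. f l = 0"
  using assms
proof (induct F rule: finite_induct)
  case empty then show ?case by simp
next
  case (insert a F)
  let ?P = "\<Prod>l\<in>F. [:-l, (1::complex):] ^ n"
  have "f a + (\<Sum>l\<in>F. f l) = 0" using insert(5) by (simp only: sum.insert[OF insert(1,2)])
  then have fa: "f a = - (\<Sum>l\<in>F. f l)" by (simp only: eq_neg_iff_add_eq_0)
  have each: "peval ?P (f l) = 0" if "l \<in> F" for l
  proof -
    have "?P = [:-l, 1:] ^ n * (\<Prod>l\<in>F - {l}. [:-l, 1:] ^ n)"
      using prod.remove[OF insert(1) that] .
    also have "\<dots> = (\<Prod>l\<in>F - {l}. [:-l, 1:] ^ n) * [:-l, 1:] ^ n" by (rule mult.commute)
    finally have "?P = (\<Prod>l\<in>F - {l}. [:-l, 1:] ^ n) * [:-l, 1:] ^ n" .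
    moreover have "f l \<in> V" "peval ([:-l, 1:] ^ n) (f l) = 0" using insert(4) that by auto
    ultimately show ?thesis by (simp only: peval_mult peval_zero_vec)
  qed
  have sumV: "(\<Sum>l\<in>F. f l) \<in> V" by (rule csub_sum[OF V_sub]) (use insert(4) in blast)
  have s1: "peval ?P (f a) = - peval ?P (\<Sum>l\<in>F. f l)"
    unfolding fa by (rule lin_on_minus[OF peval_lin V_sub sumV])
  have s2: "peval ?P (\<Sum>l\<in>F. f l) = (\<Sum>l\<in>F. peval ?P (f l))"
    by (rule lin_on_sum[OF peval_lin V_sub]) (use insert(4) in blast)
  have s3: "(\<Sum>l\<in>F. peval ?P (f l)) = 0" by (rule sum.neutral) (use each in blast)
  have "peval ?P (f a) = 0" using s1 s2 s3 by (simp only: neg_0_equal_iff_equal minus_zero)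
  moreover have "f a \<in> V" "peval ([:-a, 1:] ^ n) (f a) = 0" using insert(4) by auto
  ultimately have fa0: "f a = 0"
    using PD1[OF coprime_lin_pow_prod[OF insert(1,2), of n "\<lambda>_. n"]] by blast
  then have "(\<Sum>l\<in>F. f l) = 0" using fa by (metis minus_minus minus_zero)
  then have "\<forall>l\<in>F. f l = 0" using insert(3,4) by blast
  then show ?case using fa0 by blast
qed

end


lemma lin_on_UNIV_sub: "lin_on UNIV F \<Longrightarrow> lin_on W F"
  by (simp add: lin_on_def)

lemma lin_on_funpow: "lin_on W F \<Longrightarrow> (\<And>x. x \<in> W \<Longrightarrow> F x \<in> W) \<Longrightarrow> lin_on W (F ^^ n)"
proof (induct n)
  case 0 then show ?case by (simp add: lin_on_def)
next
  case (Suc n)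
  have mp: "x \<in> W \<Longrightarrow> (F ^^ n) x \<in> W" for x
    by (induct n) (auto simp: Suc.prems)
  show ?case using Suc mp unfolding lin_on_def by (simp add: csubspace_def)
qed

lemma funpow_maps: "(\<And>x. x \<in> W \<Longrightarrow> F x \<in> W) \<Longrightarrow> x \<in> W \<Longrightarrow> (F ^^ n) x \<in> W"
  by (induct n) auto

lemma lin_on_plus: "lin_on W F \<Longrightarrow> lin_on W G \<Longrightarrow> lin_on W (\<lambda>x. F x + G x)"
  unfolding lin_on_def by (simp add: scaleC_add_right algebra_simps)

lemma lin_on_scaleC: "lin_on W F \<Longrightarrow> lin_on W (\<lambda>x. c *\<^sub>C F x)"
  unfolding lin_on_def by (simp add: scaleC_add_right scaleC_scaleC mult.commute)

lemma lin_on_id_scale: "lin_on W (\<lambda>x. c *\<^sub>C x)"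
  unfolding lin_on_def by (simp add: scaleC_add_right scaleC_scaleC mult.commute)

lemma lin_on_sumf: "(\<And>i. i \<in> I \<Longrightarrow> lin_on W (F i)) \<Longrightarrow> lin_on W (\<lambda>x. \<Sum>i\<in>I. F i x)"
proof (induct I rule: infinite_finite_induct)
  case (infinite I) then show ?case by (simp add: lin_on_def)
next
  case empty then show ?case by (simp add: lin_on_def)
next
  case (insert i I)
  have "lin_on W (\<lambda>x. F i x + (\<Sum>i\<in>I. F i x))" using insert by (intro lin_on_plus) auto
  then show ?case using insert(1,2) by simp
qed

context opctx
begin

abbreviation Res where "Res z \<equiv> resolvent D A z"

lemma fz_lin: "lin_on D (\<lambda>x. z *\<^sub>C x - A x)"
  unfolding lin_on_def using D_sub
  by (simp add: lin_on_add[OF A_lin] lin_on_scale[OF A_lin] scaleC_add_right scaleC_diff_right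
      scaleC_scaleC mult.commute algebra_simps)

context
  fixes z assumes hz: "bij_betw (\<lambda>x. z *\<^sub>C x - A x) D UNIV"
begin

lemma R_D: "Res z y \<in> D"
  unfolding resolvent_def using hz by (metis bij_betw_imp_surj_on inv_into_into UNIV_I)

lemma R_right: "z *\<^sub>C Res z y - A (Res z y) = y"
  unfolding resolvent_def using hz
  by (metis (mono_tags, lifting) bij_betw_imp_surj_on f_inv_into_f UNIV_I)

lemma R_left: assumes "x \<in> D" shows "Res z (z *\<^sub>C x - A x) = x"
proof -
  have "inj_on (\<lambda>x. z *\<^sub>C x - A x) D" using hz by (simp add: bij_betw_def)
  then show ?thesis unfolding resolvent_def using inv_into_f_f assms by fastforce
qed

lemma R_eqI: "u \<in> D \<Longrightarrow> z *\<^sub>C u - A u = y \<Longrightarrow> Res z y = u"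
  using R_left by blast

lemma R_lin: "lin_on UNIV (Res z)"
  unfolding lin_on_def
proof (intro conjI ballI allI)
  fix x y :: 'a
  show "Res z (x + y) = Res z x + Res z y"
    by (rule R_eqI) (simp_all add: R_D csub_add[OF D_sub] lin_on_add[OF fz_lin] R_right)
next
  fix c x
  show "Res z (c *\<^sub>C x) = c *\<^sub>C Res z x"
    by (rule R_eqI) (simp_all add: R_D csub_scale[OF D_sub] lin_on_scale[OF fz_lin] R_right)
qed

lemma R_raise: "x \<in> dom_pow D A m \<Longrightarrow> Res z x \<in> dom_pow D A (Suc m)"
proof (induct m arbitrary: x)
  case 0 then show ?case using R_D by simp
next
  case (Suc m)
  have x1: "x \<in> dom_pow D A m" using Suc.prems dom_pow_Suc_le by blast
  have r: "Res z x \<in> dom_pow D A (Suc m)" using Suc.hyps[OF x1] .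
  have e: "z *\<^sub>C Res z x - A (Res z x) = x" by (rule R_right)
  have "A (Res z x) = z *\<^sub>C Res z x - (z *\<^sub>C Res z x - A (Res z x))" by simp
  then have "A (Res z x) = z *\<^sub>C Res z x - x" by (simp only: e)
  moreover have "z *\<^sub>C Res z x - x \<in> dom_pow D A (Suc m)"
    by (rule csub_diff[OF dom_pow_sub csub_scale[OF dom_pow_sub r] Suc.prems])
  ultimately have "A (Res z x) \<in> dom_pow D A (Suc m)" by simp
  then show ?case unfolding dom_pow.simps(2)[of D A "Suc m"] using R_D by blast
qed

lemma R_V: assumes "x \<in> V" shows "Res z x \<in> V"
  unfolding V_iff
proof
  fix n
  have "x \<in> dom_pow D A n" using assms unfolding V_iff by blast
  then have "Res z x \<in> dom_pow D A (Suc n)" by (rule R_raise)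
  then show "Res z x \<in> dom_pow D A n" using dom_pow_Suc_le by blast
qed

lemma R_commA: assumes "x \<in> V" shows "Res z (A x) = A (Res z x)"
proof (rule R_eqI)
  have rv: "Res z x \<in> V" using R_V[OF assms] .
  show "A (Res z x) \<in> D" using V_D[OF V_A[OF rv]] .
  have "z *\<^sub>C A (Res z x) - A (A (Res z x)) = A (z *\<^sub>C Res z x - A (Res z x))"
    using rv V_A by (simp add: lin_on_diff[OF A_lin_V V_sub] lin_on_scale[OF A_lin_V] csub_scale[OF V_sub])
  also have "\<dots> = A x" by (simp add: R_right)
  finally show "z *\<^sub>C A (Res z x) - A (A (Res z x)) = A x" .
qed

lemma R_peval: "x \<in> D \<Longrightarrow> Res z (peval [:z, -1:] x) = x"
  by (simp add: peval_lin_zm R_left)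

lemma injV_zm: "injV [:z, -1:]"
  unfolding injV_def
proof (intro ballI impI)
  fix y assume y: "y \<in> V" "peval [:z, -1:] y = 0"
  have "y = Res z (peval [:z, -1:] y)" using R_peval[OF V_D[OF y(1)]] by simp
  also have "\<dots> = 0" using y(2) lin_on_0[OF R_lin] by (simp add: csubspace_def)
  finally show "y = 0" .
qed

lemma injV_mz: "injV [:-z, 1:]"
proof -
  have eq: "[:-z, 1:] = smult (-1) [:z, -1:]" by simp
  show ?thesis unfolding eq by (rule injV_smult) (simp_all add: injV_zm)
qed

end
end


locale ratctx = opctx D A
  for D :: "'a::complex_vector set" and A :: "'a \<Rightarrow> 'a" +
  fixes \<omega>0 :: complex and \<omega> :: "nat \<Rightarrow> nat \<Rightarrow> complex" and \<nu> :: "nat \<Rightarrow> nat"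
    and zs :: "nat \<Rightarrow> complex" and N :: nat and \<mu> :: complex
  assumes nu_pos: "\<forall>j\<in>{1..N}. \<nu> j > 0"
    and zs_inj: "inj_on zs {1..N}"
    and zs_res: "\<forall>j\<in>{1..N}. bij_betw (\<lambda>x. zs j *\<^sub>C x - A x) D UNIV"
    and mu_ne: "\<mu> \<noteq> \<omega>0"
begin

abbreviation Rj where "Rj j \<equiv> Res (zs j)"

definition K where "K x = (\<Sum>j=1..N. \<Sum>i=1..\<nu> j. \<omega> j i *\<^sub>C (Rj j ^^ i) x)"

definition L where "L = (\<lambda>x. rat_op D A \<omega>0 \<omega> \<nu> zs N x - \<mu> *\<^sub>C x)"

lemma L_eq: "L x = (\<omega>0 - \<mu>) *\<^sub>C x + K x"
  unfolding L_def rat_op_def K_def by (simp add: scaleC_diff_left algebra_simps)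

lemma Rpow_lin: "j \<in> {1..N} \<Longrightarrow> lin_on UNIV (Rj j ^^ i)"
  using zs_res by (intro lin_on_funpow R_lin) auto

lemma Rpow_V: "j \<in> {1..N} \<Longrightarrow> x \<in> V \<Longrightarrow> (Rj j ^^ i) x \<in> V"
  using zs_res R_V by (intro funpow_maps) auto

lemma Rpow_commA: assumes "j \<in> {1..N}" shows "x \<in> V \<Longrightarrow> (Rj j ^^ i) (A x) = A ((Rj j ^^ i) x)"
proof (induct i arbitrary: x)
  case 0 then show ?case by simp
next
  case (Suc i)
  have h: "bij_betw (\<lambda>x. zs j *\<^sub>C x - A x) D UNIV" using zs_res assms by blast
  have "(Rj j ^^ Suc i) (A x) = Rj j ((Rj j ^^ i) (A x))" by simp
  also have "\<dots> = Rj j (A ((Rj j ^^ i) x))" using Suc by simp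
  also have "\<dots> = A (Rj j ((Rj j ^^ i) x))" using R_commA[OF h Rpow_V[OF assms Suc.prems]] .
  finally show ?case by simp
qed

lemma Rpow_raise: assumes "j \<in> {1..N}" "1 \<le> i" "x \<in> dom_pow D A m"
  shows "(Rj j ^^ i) x \<in> dom_pow D A (Suc m)"
proof -
  have h: "bij_betw (\<lambda>x. zs j *\<^sub>C x - A x) D UNIV" using zs_res assms by blast
  obtain k where k: "i = Suc k" using assms(2) by (cases i) auto
  have "(Rj j ^^ k) x \<in> dom_pow D A m"
  proof (induct k)
    case 0 then show ?case using assms(3) by simp
  next
    case (Suc k) then show ?case using R_raise[OF h] dom_pow_Suc_le by auto
  qed
  then show ?thesis unfolding k using R_raise[OF h] by simp
qed

lemma Rpow_peval: assumes "j \<in> {1..N}" shows "y \<in> V \<Longrightarrow> (Rj j ^^ i) (peval ([:zs j, -1:] ^ i) y) = y"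
proof (induct i arbitrary: y)
  case 0 then show ?case by simp
next
  case (Suc i)
  have h: "bij_betw (\<lambda>x. zs j *\<^sub>C x - A x) D UNIV" using zs_res assms by blast
  have w: "peval ([:zs j, -1:] ^ i) y \<in> V" using peval_V[OF Suc.prems] .
  have "peval ([:zs j, -1:] ^ Suc i) y = peval [:zs j, -1:] (peval ([:zs j, -1:] ^ i) y)"
    by (simp only: power_Suc peval_mult[OF Suc.prems])
  then have "(Rj j ^^ Suc i) (peval ([:zs j, -1:] ^ Suc i) y)
      = (Rj j ^^ i) (Rj j (peval [:zs j, -1:] (peval ([:zs j, -1:] ^ i) y)))"
    by (simp only: funpow_Suc_right o_apply)
  also have "\<dots> = (Rj j ^^ i) (peval ([:zs j, -1:] ^ i) y)"
    using R_peval[OF h V_D[OF w]] by simp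
  also have "\<dots> = y" using Suc.hyps[OF Suc.prems] .
  finally show ?case .
qed

lemma K_lin: "lin_on UNIV K"
proof -
  have "lin_on UNIV (\<lambda>x. \<Sum>j=1..N. \<Sum>i=1..\<nu> j. \<omega> j i *\<^sub>C (Rj j ^^ i) x)"
    by (intro lin_on_sumf lin_on_scaleC Rpow_lin) auto
  then show ?thesis unfolding K_def[abs_def] .
qed

lemma K_raise: "x \<in> dom_pow D A m \<Longrightarrow> K x \<in> dom_pow D A (Suc m)"
  unfolding K_def
  by (intro csub_sum[OF dom_pow_sub] csub_scale[OF dom_pow_sub] Rpow_raise) auto

lemma K_V: "x \<in> V \<Longrightarrow> K x \<in> V"
  unfolding K_def by (intro csub_sum[OF V_sub] csub_scale[OF V_sub] Rpow_V) auto

lemma K_commA: assumes "x \<in> V" shows "K (A x) = A (K x)"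
proof -
  have "K (A x) = (\<Sum>j=1..N. \<Sum>i=1..\<nu> j. \<omega> j i *\<^sub>C A ((Rj j ^^ i) x))"
    unfolding K_def using Rpow_commA[OF _ assms] by simp
  also have "\<dots> = (\<Sum>j=1..N. \<Sum>i=1..\<nu> j. A (\<omega> j i *\<^sub>C (Rj j ^^ i) x))"
    using lin_on_scale[OF A_lin_V Rpow_V[OF _ assms]] by simp
  also have "\<dots> = (\<Sum>j=1..N. A (\<Sum>i=1..\<nu> j. \<omega> j i *\<^sub>C (Rj j ^^ i) x))"
    by (intro sum.cong refl lin_on_sum[OF A_lin_V V_sub, symmetric] csub_scale[OF V_sub] Rpow_V assms) auto
  also have "\<dots> = A (K x)"
    unfolding K_def
    by (intro lin_on_sum[OF A_lin_V V_sub, symmetric] csub_sum[OF V_sub] csub_scale[OF V_sub] Rpow_V assms) auto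
  finally show ?thesis .
qed

lemma L_lin: "lin_on UNIV L"
  unfolding L_eq[abs_def] by (intro lin_on_plus lin_on_id_scale K_lin)

lemma L_V: "x \<in> V \<Longrightarrow> L x \<in> V"
  unfolding L_eq by (intro csub_add[OF V_sub] csub_scale[OF V_sub] K_V)

lemma L_commA: "x \<in> V \<Longrightarrow> L (A x) = A (L x)"
  unfolding L_eq using K_commA V_A K_V
  by (simp add: lin_on_add[OF A_lin_V] lin_on_scale[OF A_lin_V] csub_scale[OF V_sub])

lemma Ln_peval: "x \<in> V \<Longrightarrow> (L ^^ n) (peval g x) = peval g ((L ^^ n) x)"
proof (rule peval_commute)
  show "lin_on V (L ^^ n)" using lin_on_funpow[OF lin_on_UNIV_sub[OF L_lin] L_V] .
  show "\<And>x. x \<in> V \<Longrightarrow> (L ^^ n) x \<in> V" using funpow_maps[OF L_V] .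
  show "\<And>x. x \<in> V \<Longrightarrow> (L ^^ n) (A x) = A ((L ^^ n) x)"
  proof -
    fix x assume "x \<in> V" then show "(L ^^ n) (A x) = A ((L ^^ n) x)"
    proof (induct n arbitrary: x)
      case 0 then show ?case by simp
    next
      case (Suc n) then show ?case using L_commA funpow_maps[OF L_V] by simp
    qed
  qed
qed

lemma bootstrap: assumes "(L ^^ n) u = 0" shows "u \<in> V"
proof -
  let ?c = "\<omega>0 - \<mu>"
  have c0: "?c \<noteq> 0" using mu_ne by simp
  have "\<exists>G. (\<forall>x. (L ^^ n) x = (?c ^ n) *\<^sub>C x + G x) \<and>
      (\<forall>m x. x \<in> dom_pow D A m \<longrightarrow> G x \<in> dom_pow D A (Suc m))"
  proof (induct n)
    case 0 show ?case
      proof (intro exI[of _ "\<lambda>x. 0"] conjI allI impI)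
      fix x show "(L ^^ 0) x = (?c ^ 0) *\<^sub>C x + 0" by (simp add: scaleC_one)
    next
      fix m x show "(0::'a) \<in> dom_pow D A (Suc m)" by (rule csub_0[OF dom_pow_sub])
    qed
  next
    case (Suc n)
    then obtain G where G: "\<forall>x. (L ^^ n) x = (?c ^ n) *\<^sub>C x + G x"
      "\<forall>m x. x \<in> dom_pow D A m \<longrightarrow> G x \<in> dom_pow D A (Suc m)" by blast
    define G' where "G' x = ?c *\<^sub>C G x + K ((?c ^ n) *\<^sub>C x + G x)" for x
    have "(L ^^ Suc n) x = (?c ^ Suc n) *\<^sub>C x + G' x" for x
      using G(1) by (simp add: L_eq G'_def scaleC_add_right scaleC_scaleC algebra_simps)
    moreover have "G' x \<in> dom_pow D A (Suc m)" if "x \<in> dom_pow D A m" for m x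
    proof -
      have "G x \<in> dom_pow D A m" using G(2) that dom_pow_Suc_le by blast
      then have "(?c ^ n) *\<^sub>C x + G x \<in> dom_pow D A m"
        using that by (intro csub_add[OF dom_pow_sub] csub_scale[OF dom_pow_sub])
      then have k1: "K ((?c ^ n) *\<^sub>C x + G x) \<in> dom_pow D A (Suc m)" by (rule K_raise)
      have g1: "G x \<in> dom_pow D A (Suc m)" using G(2) that by blast
      show ?thesis unfolding G'_def by (rule csub_add[OF dom_pow_sub csub_scale[OF dom_pow_sub g1] k1])
    qed
    ultimately show ?case by blast
  qed
  then obtain G where G: "\<forall>x. (L ^^ n) x = (?c ^ n) *\<^sub>C x + G x"
      "\<forall>m x. x \<in> dom_pow D A m \<longrightarrow> G x \<in> dom_pow D A (Suc m)" by blast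
  have e: "(L ^^ n) u = (?c ^ n) *\<^sub>C u + G u" using G(1) by blast
  have "(?c ^ n) *\<^sub>C u + G u = 0" using e assms by simp
  then have cu: "(?c ^ n) *\<^sub>C u = - G u" by (simp only: eq_neg_iff_add_eq_0)
  have inv: "inverse (?c ^ n) *\<^sub>C ((?c ^ n) *\<^sub>C u) = u"
    using c0 by (simp add: scaleC_scaleC scaleC_one)
  have "u \<in> dom_pow D A m" for m
  proof (induct m)
    case 0 then show ?case by simp
  next
    case (Suc m)
    have "- G u \<in> dom_pow D A (Suc m)" using G(2) Suc by (intro csub_minus[OF dom_pow_sub]) blast
    then have "inverse (?c ^ n) *\<^sub>C ((?c ^ n) *\<^sub>C u) \<in> dom_pow D A (Suc m)"
      unfolding cu by (rule csub_scale[OF dom_pow_sub])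
    then show ?case by (simp only: inv)
  qed
  then show ?thesis unfolding V_iff by blast
qed

end


context ratctx
begin

definition zm where "zm j = [:zs j, -1:]"
definition q where "q = (\<Prod>j\<in>{1..N}. zm j ^ \<nu> j)"
definition qji where "qji j i = zm j ^ (\<nu> j - i) * (\<Prod>k\<in>{1..N}-{j}. zm k ^ \<nu> k)"
definition p where "p = smult (\<omega>0 - \<mu>) q + (\<Sum>j=1..N. \<Sum>i=1..\<nu> j. smult (\<omega> j i) (qji j i))"

lemma q_split: assumes "j \<in> {1..N}" "i \<le> \<nu> j" shows "q = zm j ^ i * qji j i"
proof -
  have "q = zm j ^ \<nu> j * (\<Prod>k\<in>{1..N}-{j}. zm k ^ \<nu> k)" unfolding q_def
    by (rule prod.remove) (use assms in simp_all)
  also have "zm j ^ \<nu> j = zm j ^ i * zm j ^ (\<nu> j - i)"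
    using assms(2) by (metis le_add_diff_inverse power_add)
  finally show ?thesis unfolding qji_def by (simp only: mult.assoc)
qed

lemma L_peval_q: assumes u: "u \<in> V" shows "L (peval q u) = peval p u"
proof -
  have Rq: "(Rj j ^^ i) (peval q u) = peval (qji j i) u" if "j \<in> {1..N}" "i \<in> {1..\<nu> j}" for j i
  proof -
    have e: "q = zm j ^ i * qji j i" using q_split[OF that(1)] that(2) by simp
    have "peval q u = peval (zm j ^ i) (peval (qji j i) u)" by (simp only: e peval_mult[OF u])
    then show ?thesis using Rpow_peval[OF that(1) peval_V[OF u]] unfolding zm_def by simp
  qed
  have "L (peval q u) = (\<omega>0 - \<mu>) *\<^sub>C peval q u + (\<Sum>j=1..N. \<Sum>i=1..\<nu> j. \<omega> j i *\<^sub>C peval (qji j i) u)"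
    unfolding L_eq K_def using Rq by simp
  also have "\<dots> = peval p u" unfolding p_def using u
    by (simp add: peval_add_poly peval_smult peval_sum_poly)
  finally show ?thesis .
qed

lemma injV_q: "injV q"
  unfolding q_def zm_def using zs_res
  by (intro injV_prod injV_pow injV_zm) auto

lemma Ln_q: "u \<in> V \<Longrightarrow> (L ^^ n) (peval (q ^ n) u) = peval (p ^ n) u"
proof (induct n)
  case 0 then show ?case by simp
next
  case (Suc n)
  have w: "peval (q ^ n) u \<in> V" using peval_V[OF Suc.prems] .
  have "peval (q ^ Suc n) u = peval q (peval (q ^ n) u)"
    by (simp only: power_Suc peval_mult[OF Suc.prems])
  then have "(L ^^ Suc n) (peval (q ^ Suc n) u) = (L ^^ n) (L (peval q (peval (q ^ n) u)))"
    by (simp only: funpow_Suc_right o_apply)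
  also have "\<dots> = (L ^^ n) (peval p (peval (q ^ n) u))" by (simp only: L_peval_q[OF w])
  also have "\<dots> = peval p ((L ^^ n) (peval (q ^ n) u))" by (rule Ln_peval[OF w])
  also have "\<dots> = peval p (peval (p ^ n) u)" by (simp only: Suc.hyps[OF Suc.prems])
  also have "\<dots> = peval (p ^ Suc n) u" by (simp only: power_Suc peval_mult[OF Suc.prems])
  finally show ?case .
qed

lemma L_iff: assumes u: "u \<in> V" shows "(L ^^ n) u = 0 \<longleftrightarrow> peval (p ^ n) u = 0"
proof -
  have e: "peval (p ^ n) u = peval (q ^ n) ((L ^^ n) u)"
    using Ln_q[OF u, of n] Ln_peval[OF u, of n "q ^ n"] by simp
  have "(L ^^ n) u \<in> V" using funpow_maps[OF L_V u] .
  then show ?thesis unfolding e using injV_pow[OF injV_q, of n] unfolding injV_def by auto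
qed

lemma zm_ne: "zm j \<noteq> 0" unfolding zm_def by simp
lemma degree_zm: "degree (zm j) = 1" unfolding zm_def by simp

lemma q_ne: "q \<noteq> 0"
  unfolding q_def using zm_ne by (simp add: prod_zero_iff)

lemma coeff_qji: assumes "j \<in> {1..N}" "i \<in> {1..\<nu> j}" shows "coeff (qji j i) (degree q) = 0"
proof -
  have e: "q = zm j ^ i * qji j i" using q_split[OF assms(1)] assms(2) by simp
  have "qji j i \<noteq> 0" using q_ne e by auto
  then have "degree q = i + degree (qji j i)"
    unfolding e using zm_ne by (simp add: degree_mult_eq degree_power_eq degree_zm)
  then show ?thesis using assms(2) by (intro coeff_eq_0) auto
qed

lemma p_ne: "p \<noteq> 0"
proof -
  have "coeff p (degree q) = (\<omega>0 - \<mu>) * lead_coeff q"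
    unfolding p_def using coeff_qji by (simp add: coeff_sum)
  also have "\<dots> \<noteq> 0" using mu_ne q_ne by simp
  finally show ?thesis by auto
qed

lemma poly_q: "poly q l = (\<Prod>j\<in>{1..N}. (zs j - l) ^ \<nu> j)"
  unfolding q_def zm_def by (simp add: poly_prod)

lemma poly_q_ne: "l \<notin> zs ` {1..N} \<Longrightarrow> poly q l \<noteq> 0"
  unfolding poly_q by (auto simp: prod_zero_iff)

lemma poly_p: assumes l: "l \<notin> zs ` {1..N}"
  shows "poly p l = (rat_fun \<omega>0 \<omega> \<nu> zs N l - \<mu>) * poly q l"
proof -
  have qj: "poly (qji j i) l = poly q l / (zs j - l) ^ i" if "j \<in> {1..N}" "i \<in> {1..\<nu> j}" for j i
  proof -
    have e: "q = zm j ^ i * qji j i" using q_split[OF that(1)] that(2) by simp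
    have "zs j - l \<noteq> 0" using l that(1) by auto
    then show ?thesis unfolding e by (simp add: zm_def)
  qed
  have "poly p l = (\<omega>0 - \<mu>) * poly q l + (\<Sum>j=1..N. \<Sum>i=1..\<nu> j. \<omega> j i * (poly q l / (zs j - l) ^ i))"
    unfolding p_def using qj by (simp add: poly_sum)
  also have "\<dots> = (rat_fun \<omega>0 \<omega> \<nu> zs N l - \<mu>) * poly q l"
    unfolding rat_fun_def by (simp add: algebra_simps sum_distrib_left sum_distrib_right)
  finally show ?thesis .
qed

lemma root_iff: "l \<notin> zs ` {1..N} \<Longrightarrow> poly p l = 0 \<longleftrightarrow> rat_fun \<omega>0 \<omega> \<nu> zs N l = \<mu>"
  using poly_p poly_q_ne by simp

end


context ratctx
begin

abbreviation SS where "SS \<equiv> rat_preimage \<omega>0 \<omega> \<nu> zs N \<mu>"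

lemma SS_eq: "SS = {l. poly p l = 0 \<and> l \<notin> zs ` {1..N}}"
  unfolding rat_preimage_def using root_iff by blast

lemma SS_fin: "finite SS"
  unfolding SS_eq using poly_roots_finite[OF p_ne] by (rule rev_finite_subset) auto

lemma GE_eq: "gen_eigenspace (rat_op D A \<omega>0 \<omega> \<nu> zs N) \<mu> = {u. \<exists>n\<ge>1. (L ^^ n) u = 0}"
  unfolding gen_eigenspace_def L_def by auto

lemma common_exp:
  assumes "finite F" "\<forall>s\<in>F. f s \<in> gen_eigenspace_inf D A s"
  shows "\<exists>n\<ge>1. \<forall>s\<in>F. f s \<in> V \<and> peval ([:-s, 1:] ^ n) (f s) = 0"
proof -
  have "\<forall>s\<in>F. \<exists>n. f s \<in> V \<and> peval ([:-s, 1:] ^ n) (f s) = 0"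
    using assms(2) gen_eig_iff by blast
  then obtain g where g: "\<forall>s\<in>F. f s \<in> V \<and> peval ([:-s, 1:] ^ g s) (f s) = 0"
    by metis
  define n where "n = Suc (\<Sum>s\<in>F. g s)"
  have "\<forall>s\<in>F. f s \<in> V \<and> peval ([:-s, 1:] ^ n) (f s) = 0"
  proof
    fix s assume s: "s \<in> F"
    have "g s \<le> n" unfolding n_def using member_le_sum[OF s, of g] assms(1) by simp
    then show "f s \<in> V \<and> peval ([:-s, 1:] ^ n) (f s) = 0"
      using g s peval_pow_mono by blast
  qed
  moreover have "n \<ge> 1" unfolding n_def by simp
  ultimately show ?thesis by blast
qed

lemma kill_root:
  assumes "s \<in> SS" "x \<in> V" "peval ([:-s, 1:] ^ n) x = 0"
  shows "peval (p ^ n) x = 0"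
proof -
  have "poly p s = 0" using assms(1) SS_eq by blast
  then obtain p' where p': "p = [:-s, 1:] * p'" using poly_eq_0_iff_dvd by (metis dvdE)
  have "p ^ n = p' ^ n * [:-s, 1:] ^ n" unfolding p' by (simp only: power_mult_distrib mult.commute)
  then show ?thesis by (simp only: peval_mult[OF assms(2)] assms(3) peval_zero_vec)
qed

lemma main: "is_direct_sum (gen_eigenspace (rat_op D A \<omega>0 \<omega> \<nu> zs N) \<mu>) SS (gen_eigenspace_inf D A)"
  unfolding is_direct_sum_def
proof (intro conjI allI impI)
  show "gen_eigenspace (rat_op D A \<omega>0 \<omega> \<nu> zs N) \<mu> =
    {\<Sum>s\<in>F. f s |F f. finite F \<and> F \<subseteq> SS \<and> (\<forall>s\<in>F. f s \<in> gen_eigenspace_inf D A s)}"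
    (is "?E = ?R")
  proof
    show "?E \<subseteq> ?R"
    proof
      fix u assume "u \<in> ?E"
      then obtain n where n: "n \<ge> 1" "(L ^^ n) u = 0" unfolding GE_eq by blast
      have u: "u \<in> V" using bootstrap[OF n(2)] .
      have pn: "peval (p ^ n) u = 0" using L_iff[OF u] n(2) by simp
      define Z where "Z = {z. poly p z = 0}"
      define Zp where "Zp = Z \<inter> zs ` {1..N}"
      have finZ: "finite Z" unfolding Z_def using poly_roots_finite[OF p_ne] .
      have ZS: "Z = Zp \<union> SS" "Zp \<inter> SS = {}" unfolding Zp_def Z_def SS_eq by auto
      have finZp: "finite Zp" "finite SS" using finZ ZS by auto
      define c where "c = lead_coeff p"
      have c0: "c \<noteq> 0" unfolding c_def using p_ne by simp
      define W where "W = (\<Prod>z\<in>Zp. [:-z, 1:] ^ order z p)"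
      define G where "G = (\<Prod>z\<in>SS. [:-z, 1:] ^ order z p)"
      have "p = smult c (\<Prod>z\<in>Z. [:-z, 1:] ^ order z p)"
        unfolding c_def Z_def using complex_poly_decompose[of p] by simp
      also have "(\<Prod>z\<in>Z. [:-z, 1:] ^ order z p) = W * G"
        unfolding W_def G_def ZS(1) by (rule prod.union_disjoint[OF finZp ZS(2)])
      finally have pd: "p ^ n = smult (c ^ n) (W ^ n * G ^ n)"
        by (simp only: smult_power power_mult_distrib)
      have injW: "injV (W ^ n)"
        unfolding W_def
      proof (intro injV_pow injV_prod)
        fix z assume "z \<in> Zp"
        then obtain j where j: "j \<in> {1..N}" "z = zs j" unfolding Zp_def by blast
        then show "injV [:-z, 1:]" using zs_res injV_mz by blast
      qed
      have gv: "peval (G ^ n) u \<in> V" using peval_V[OF u] .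
      have "c ^ n *\<^sub>C peval (W ^ n) (peval (G ^ n) u) = 0"
        using pn unfolding pd by (simp only: peval_smult[OF u] peval_mult[OF u])
      then have "peval (W ^ n) (peval (G ^ n) u) = 0" using scaleC_cancel[of "c ^ n"] c0 by simp
      then have "peval (G ^ n) u = 0" using injW gv unfolding injV_def by blast
      moreover have "G ^ n = (\<Prod>z\<in>SS. [:-z, 1:] ^ (order z p * n))"
        unfolding G_def by (simp only: prod_power_distrib power_mult)
      ultimately have "peval (\<Prod>z\<in>SS. [:-z, 1:] ^ (order z p * n)) u = 0" by simp
      then obtain f where f: "\<forall>l\<in>SS. f l \<in> V \<and> peval ([:-l, 1:] ^ (order l p * n)) (f l) = 0"
          "u = (\<Sum>l\<in>SS. f l)"
        using PD3[OF finZp(2) u, of "\<lambda>z. order z p * n"] by blast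
      have "\<forall>l\<in>SS. f l \<in> gen_eigenspace_inf D A l"
      proof
        fix l assume l: "l \<in> SS"
        have "peval ([:-l, 1:] ^ Suc (order l p * n)) (f l) = 0"
          using f(1) l peval_pow_mono[of "f l" l "order l p * n" "Suc (order l p * n)"] by auto
        then show "f l \<in> gen_eigenspace_inf D A l" unfolding gen_eig_iff using f(1) l
          by (intro conjI exI[of _ "Suc (order l p * n)"]) auto
      qed
      then show "u \<in> ?R" using f(2) finZp(2) by blast
    qed
  next
    show "?R \<subseteq> ?E"
    proof
      fix u assume "u \<in> ?R"
      then obtain F f where F: "u = (\<Sum>s\<in>F. f s)" "finite F" "F \<subseteq> SS"
        "\<forall>s\<in>F. f s \<in> gen_eigenspace_inf D A s" by blast
      obtain n where n: "n \<ge> 1" "\<forall>s\<in>F. f s \<in> V \<and> peval ([:-s, 1:] ^ n) (f s) = 0"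
        using common_exp[OF F(2,4)] by blast
      have uV: "u \<in> V" unfolding F(1) using n(2) by (intro csub_sum[OF V_sub]) blast
      have "peval (p ^ n) u = (\<Sum>s\<in>F. peval (p ^ n) (f s))"
        unfolding F(1) using n(2) by (intro lin_on_sum[OF peval_lin V_sub]) blast
      also have "\<dots> = 0" using n(2) F(3) kill_root by (intro sum.neutral) blast
      finally have "(L ^^ n) u = 0" using L_iff[OF uV] by simp
      then show "u \<in> ?E" unfolding GE_eq using n(1) by blast
    qed
  qed
next
  fix F f
  assume a: "finite F \<and> F \<subseteq> SS \<and> (\<forall>s\<in>F. f s \<in> gen_eigenspace_inf D A s) \<and> (\<Sum>s\<in>F. f s) = 0"
  obtain n where n: "n \<ge> 1" "\<forall>s\<in>F. f s \<in> V \<and> peval ([:-s, 1:] ^ n) (f s) = 0"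
    using common_exp[of F f] a by blast
  show "\<forall>s\<in>F. f s = 0" using PD4[of F f n] a n(2) by blast
qed

end


theorem lemma2p1:
  fixes D :: "'a::chilbert_space set" and A :: "'a \<Rightarrow> 'a"
    and \<omega>0 :: complex and \<omega> :: "nat \<Rightarrow> nat \<Rightarrow> complex" and \<nu> :: "nat \<Rightarrow> nat"
    and zs :: "nat \<Rightarrow> complex" and N :: nat and \<mu> :: complex
  assumes "linear_op D A" and "closed_op D A"
    and "\<forall>j\<in>{1..N}. \<nu> j > 0"
    and "inj_on zs {1..N}"
    and "\<forall>j\<in>{1..N}. zs j \<in> resolvent_set D A"
    and "\<mu> \<noteq> \<omega>0"
  shows "is_direct_sum (gen_eigenspace (rat_op D A \<omega>0 \<omega> \<nu> zs N) \<mu>)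
           (rat_preimage \<omega>0 \<omega> \<nu> zs N \<mu>) (gen_eigenspace_inf D A)"
proof -
  interpret ratctx D A \<omega>0 \<omega> \<nu> zs N \<mu>
  proof (unfold_locales)
    show "linear_op D A" by fact
    show "\<forall>j\<in>{1..N}. 0 < \<nu> j" by fact
    show "inj_on zs {1..N}" by fact
    show "\<forall>j\<in>{1..N}. bij_betw (\<lambda>x. zs j *\<^sub>C x - A x) D UNIV"
      using assms(5) unfolding resolvent_set_def by blast
    show "\<mu> \<noteq> \<omega>0" by fact
  qed
  show ?thesis using main .
qed

end
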